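(* Suppose $\mathcal X$ is convex and $x\mapsto\ell(x,i)$ is convex for each $i\in\Sigma$. Let $\mathbb Q\in\mathcal P$ and $\alpha>0$ satisfy $\sqrt{2\alpha}\le\min_{i\in\Sigma}\mathbb Q(i)\cdot\min_{i\in\Sigma}\min(\mathbb Q(i),1-\mathbb Q(i))$. Then $x\mapsto c(x,\mathbb Q)+\sqrt{2\alpha\,\mathrm{Var}_{\mathbb Q}(\ell(x,\xi))}$ is convex on $\mathcal X$. (In particular this applies with $\mathbb Q=\hat{\mathbb P}_T$ and $\alpha=a_T/T$.)
   Context: $\Sigma=\{1,\dots,d\}$ ($d\ge2$) finite, $\mathcal P$ the probability simplex; $\mathcal X\subset\mathbb R^n$ compact; $\ell:\mathcal X\times\Sigma\to\mathbb R$. $c(x,\mathbb Q)=\sum_i\ell(x,i)\mathbb Q(i)$ and $\mathrm{Var}_{\mathbb Q}(\ell(x,\xi))=\sum_i\mathbb Q(i)(\ell(x,i)-c(x,\mathbb Q))^2$. $\hat{\mathbb P}_T$ denotes the empirical distribution of $T$ observed samples and $(a_T)$ a positive sequence. *)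

theory Defs
  imports "HOL-Analysis.Analysis"
begin

text \<open>Sigma = {1..d}; distributions are functions nat => real restricted to {1..d}.\<close>

definition prob_simplex :: "nat \<Rightarrow> (nat \<Rightarrow> real) set" where
  "prob_simplex d = {Q. (\<forall>i\<in>{1..d}. 0 \<le> Q i) \<and> (\<Sum>i\<in>{1..d}. Q i) = 1}"

definition cost :: "nat \<Rightarrow> ('a \<Rightarrow> nat \<Rightarrow> real) \<Rightarrow> 'a \<Rightarrow> (nat \<Rightarrow> real) \<Rightarrow> real" where
  "cost d l x Q = (\<Sum>i\<in>{1..d}. l x i * Q i)"

definition variance_Q :: "nat \<Rightarrow> ('a \<Rightarrow> nat \<Rightarrow> real) \<Rightarrow> 'a \<Rightarrow> (nat \<Rightarrow> real) \<Rightarrow> real" where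
  "variance_Q d l x Q = (\<Sum>i\<in>{1..d}. Q i * (l x i - cost d l x Q)\<^sup>2)"

end

theory Submission
  imports Defs
begin

definition mQ :: "nat \<Rightarrow> (nat \<Rightarrow> real) \<Rightarrow> (nat \<Rightarrow> real) \<Rightarrow> real" where
  "mQ d Q y = (\<Sum>i\<in>{1..d}. y i * Q i)"

definition NQ :: "nat \<Rightarrow> (nat \<Rightarrow> real) \<Rightarrow> (nat \<Rightarrow> real) \<Rightarrow> real" where
  "NQ d Q y = L2_set (\<lambda>i. sqrt (Q i) * (y i - mQ d Q y)) {1..d}"

lemma mQ_lin: "mQ d Q (\<lambda>i. u * p i + v * r i) = u * mQ d Q p + v * mQ d Q r"
  by (simp add: mQ_def sum.distrib sum_distrib_left algebra_simps)

lemma mQ_diff: "mQ d Q (\<lambda>i. b i - a i) = mQ d Q b - mQ d Q a"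
  by (simp add: mQ_def sum_subtractf algebra_simps)

lemma NQ_var:
  assumes "\<forall>i\<in>{1..d}. 0 \<le> Q i"
  shows "sqrt (variance_Q d l x Q) = NQ d Q (l x)"
proof -
  have "cost d l x Q = mQ d Q (l x)" by (simp add: cost_def mQ_def)
  moreover have "\<And>i. i \<in> {1..d} \<Longrightarrow> Q i * (l x i - mQ d Q (l x))\<^sup>2
        = (sqrt (Q i) * (l x i - mQ d Q (l x)))\<^sup>2"
    using assms by (simp add: power_mult_distrib)
  ultimately show ?thesis
    unfolding variance_Q_def NQ_def L2_set_def by (metis (no_types, lifting) sum.cong)
qed

lemma NQ_convex:
  assumes "0 \<le> u" "u \<le> 1"
  shows "NQ d Q (\<lambda>i. (1 - u) * p i + u * r i) \<le> (1 - u) * NQ d Q p + u * NQ d Q r"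
proof -
  let ?A = "\<lambda>i. sqrt (Q i) * (p i - mQ d Q p)"
  let ?B = "\<lambda>i. sqrt (Q i) * (r i - mQ d Q r)"
  have eq: "NQ d Q (\<lambda>i. (1 - u) * p i + u * r i) = L2_set (\<lambda>i. (1-u) * ?A i + u * ?B i) {1..d}"
    unfolding NQ_def mQ_lin by (rule L2_set_cong) (auto simp: algebra_simps)
  have "L2_set (\<lambda>i. (1-u) * ?A i + u * ?B i) {1..d}
        \<le> L2_set (\<lambda>i. (1-u) * ?A i) {1..d} + L2_set (\<lambda>i. u * ?B i) {1..d}"
    by (rule L2_set_triangle_ineq)
  also have "\<dots> = (1 - u) * NQ d Q p + u * NQ d Q r"
    using assms unfolding NQ_def by (simp add: L2_set_right_distrib)
  finally show ?thesis using eq by simp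
qed

lemma NQ_sub:
  "NQ d Q a \<le> NQ d Q b + NQ d Q (\<lambda>i. b i - a i)"
proof -
  let ?A = "\<lambda>i. sqrt (Q i) * (b i - mQ d Q b)"
  let ?B = "\<lambda>i. - (sqrt (Q i) * ((b i - a i) - mQ d Q (\<lambda>i. b i - a i)))"
  have eq: "NQ d Q a = L2_set (\<lambda>i. ?A i + ?B i) {1..d}"
    unfolding NQ_def mQ_diff by (rule L2_set_cong) (auto simp: algebra_simps)
  have "L2_set (\<lambda>i. ?A i + ?B i) {1..d} \<le> L2_set ?A {1..d} + L2_set ?B {1..d}"
    by (rule L2_set_triangle_ineq)
  also have "L2_set ?B {1..d} = NQ d Q (\<lambda>i. b i - a i)"
    unfolding NQ_def L2_set_def by simp
  finally show ?thesis using eq unfolding NQ_def by simp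
qed

lemma sq_sum_le:
  assumes "finite A" "\<forall>i\<in>A. 0 \<le> (x i::real)"
  shows "(\<Sum>i\<in>A. (x i)\<^sup>2) \<le> (\<Sum>i\<in>A. x i)\<^sup>2"
proof -
  have "(\<Sum>i\<in>A. (x i)\<^sup>2) \<le> (\<Sum>i\<in>A. x i * (\<Sum>j\<in>A. x j))"
  proof (rule sum_mono)
    fix i assume i: "i \<in> A"
    have "x i \<le> (\<Sum>j\<in>A. x j)" using assms i by (intro member_le_sum) auto
    then show "(x i)\<^sup>2 \<le> x i * (\<Sum>j\<in>A. x j)"
      using assms i by (simp add: power2_eq_square mult_left_mono)
  qed
  also have "\<dots> = (\<Sum>i\<in>A. x i)\<^sup>2" by (simp add: power2_eq_square sum_distrib_right)
  finally show ?thesis .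
qed

lemma NQ_small:
  assumes Qnn: "\<forall>i\<in>{1..d}. 0 \<le> Q i" and Qs: "(\<Sum>i\<in>{1..d}. Q i) = 1"
    and b0: "0 \<le> \<beta>" and bq: "\<forall>i\<in>{1..d}. \<beta>\<^sup>2 \<le> Q i"
    and dn: "\<forall>i\<in>{1..d}. 0 \<le> \<delta> i"
  shows "\<beta> * NQ d Q \<delta> \<le> mQ d Q \<delta>"
proof -
  define m where "m = mQ d Q \<delta>"
  have m0: "0 \<le> m" unfolding m_def mQ_def using Qnn dn by (intro sum_nonneg) auto
  have sq: "(NQ d Q \<delta>)\<^sup>2 = (\<Sum>i\<in>{1..d}. Q i * (\<delta> i - m)\<^sup>2)"
    unfolding NQ_def L2_set_def m_def using Qnn
    by (simp add: power_mult_distrib, intro sum_nonneg, simp)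
  have "(\<Sum>i\<in>{1..d}. Q i * (\<delta> i - m)\<^sup>2)
     = (\<Sum>i\<in>{1..d}. Q i * (\<delta> i)\<^sup>2) - 2 * m * (\<Sum>i\<in>{1..d}. \<delta> i * Q i) + m\<^sup>2 * (\<Sum>i\<in>{1..d}. Q i)"
    by (simp add: power2_diff algebra_simps sum.distrib sum_subtractf sum_distrib_left)
  also have "\<dots> = (\<Sum>i\<in>{1..d}. Q i * (\<delta> i)\<^sup>2) - m\<^sup>2"
    using Qs by (simp add: m_def mQ_def power2_eq_square)
  finally have v: "(NQ d Q \<delta>)\<^sup>2 \<le> (\<Sum>i\<in>{1..d}. Q i * (\<delta> i)\<^sup>2)" using sq by simp
  have "(\<beta> * NQ d Q \<delta>)\<^sup>2 = \<beta>\<^sup>2 * (NQ d Q \<delta>)\<^sup>2" by (simp add: power_mult_distrib)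
  also have "\<dots> \<le> \<beta>\<^sup>2 * (\<Sum>i\<in>{1..d}. Q i * (\<delta> i)\<^sup>2)" using v by (simp add: mult_left_mono)
  also have "\<dots> = (\<Sum>i\<in>{1..d}. \<beta>\<^sup>2 * (Q i * (\<delta> i)\<^sup>2))" by (simp add: sum_distrib_left)
  also have "\<dots> \<le> (\<Sum>i\<in>{1..d}. (\<delta> i * Q i)\<^sup>2)"
  proof (rule sum_mono)
    fix i assume i: "i \<in> {1..d}"
    have "\<beta>\<^sup>2 * (Q i * (\<delta> i)\<^sup>2) \<le> Q i * (Q i * (\<delta> i)\<^sup>2)"
      using bq Qnn i by (intro mult_right_mono) auto
    then show "\<beta>\<^sup>2 * (Q i * (\<delta> i)\<^sup>2) \<le> (\<delta> i * Q i)\<^sup>2"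
      by (simp add: power2_eq_square algebra_simps)
  qed
  also have "\<dots> \<le> m\<^sup>2" unfolding m_def mQ_def
    using Qnn dn by (intro sq_sum_le) auto
  finally have "(\<beta> * NQ d Q \<delta>)\<^sup>2 \<le> m\<^sup>2" .
  then have "\<beta> * NQ d Q \<delta> \<le> m" using m0
    by (rule power2_le_imp_le)
  then show ?thesis by (simp add: m_def)
qed

theorem mainTheorem15:
  fixes d :: nat and X :: "'a::euclidean_space set"
    and l :: "'a \<Rightarrow> nat \<Rightarrow> real" and Q :: "nat \<Rightarrow> real" and \<alpha> :: real
  assumes "d \<ge> 2"
    and "compact X" and "convex X"
    and "\<forall>i\<in>{1..d}. convex_on X (\<lambda>x. l x i)"
    and "Q \<in> prob_simplex d"
    and "\<alpha> > 0"
    and "sqrt (2 * \<alpha>) \<le> (MIN i\<in>{1..d}. Q i) * (MIN i\<in>{1..d}. min (Q i) (1 - Q i))"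
  shows "convex_on X (\<lambda>x. cost d l x Q + sqrt (2 * \<alpha> * variance_Q d l x Q))"
proof -
  define \<beta> where "\<beta> = sqrt (2 * \<alpha>)"
  have Qnn: "\<forall>i\<in>{1..d}. 0 \<le> Q i" and Qs: "(\<Sum>i\<in>{1..d}. Q i) = 1"
    using assms(5) by (auto simp: prob_simplex_def)
  have ne: "{1..d} \<noteq> {}" using assms(1) by auto
  define qm where "qm = (MIN i\<in>{1..d}. Q i)"
  define mm where "mm = (MIN i\<in>{1..d}. min (Q i) (1 - Q i))"
  have qm0: "0 \<le> qm" unfolding qm_def using ne Qnn by (simp add: Min_ge_iff)
  have qmle: "\<forall>i\<in>{1..d}. qm \<le> Q i" unfolding qm_def by simp
  have Q1: "Q 1 \<le> 1"
  proof -
    have "Q 1 \<le> (\<Sum>i\<in>{1..d}. Q i)" using Qnn ne by (intro member_le_sum) auto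
    then show ?thesis using Qs by simp
  qed
  have i1: "1 \<in> {1..d}" using assms(1) by auto
  have "mm \<le> min (Q 1) (1 - Q 1)" unfolding mm_def using i1 by (intro Min_le) auto
  then have mm1: "mm \<le> 1" using Qnn i1 by auto
  have b0: "0 \<le> \<beta>" unfolding \<beta>_def using assms(6) by simp
  have bqm: "\<beta> \<le> qm" using assms(7) qm0 mm1 unfolding \<beta>_def qm_def[symmetric] mm_def[symmetric]
    by (smt (verit, best) mult_left_le)
  have qm1: "qm \<le> 1" using qmle Q1 ne assms(1) by force
  have bq: "\<forall>i\<in>{1..d}. \<beta>\<^sup>2 \<le> Q i"
  proof
    fix i assume "i \<in> {1..d}"
    have "\<beta>\<^sup>2 \<le> qm * qm" unfolding power2_eq_square using b0 bqm by (intro mult_mono) auto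
    also have "\<dots> \<le> qm" using qm0 qm1 by (simp add: mult_left_le)
    finally show "\<beta>\<^sup>2 \<le> Q i" using qmle \<open>i \<in> {1..d}\<close> by force
  qed
  define G where "G = (\<lambda>y. mQ d Q y + \<beta> * NQ d Q y)"
  have feq: "cost d l x Q + sqrt (2 * \<alpha> * variance_Q d l x Q) = G (l x)" for x
    unfolding G_def \<beta>_def using NQ_var[OF Qnn, of l x]
    by (simp add: real_sqrt_mult cost_def mQ_def)
  have mono: "G a \<le> G b" if "\<forall>i\<in>{1..d}. a i \<le> b i" for a b
  proof -
    have "\<beta> * NQ d Q a \<le> \<beta> * NQ d Q b + \<beta> * NQ d Q (\<lambda>i. b i - a i)"
      using NQ_sub[of d Q a b] b0 by (metis distrib_left mult_left_mono)
    also have "\<beta> * NQ d Q (\<lambda>i. b i - a i) \<le> mQ d Q (\<lambda>i. b i - a i)"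
      using that by (intro NQ_small[OF Qnn Qs b0 bq]) auto
    finally show ?thesis unfolding G_def mQ_diff by simp
  qed
  show ?thesis
  proof (rule convex_onI[OF _ assms(3)])
    fix t :: real and x y assume t: "0 < t" "t < 1" and xy: "x \<in> X" "y \<in> X"
    let ?z = "(1 - t) *\<^sub>R x + t *\<^sub>R y"
    let ?b = "\<lambda>i. (1 - t) * l x i + t * l y i"
    have "\<forall>i\<in>{1..d}. l ?z i \<le> ?b i"
      using assms(4) t xy by (auto intro: convex_onD)
    then have "G (l ?z) \<le> G ?b" by (rule mono)
    also have "\<dots> \<le> (1 - t) * G (l x) + t * G (l y)"
    proof -
      have "\<beta> * NQ d Q ?b \<le> \<beta> * ((1 - t) * NQ d Q (l x) + t * NQ d Q (l y))"
        using NQ_convex[of t d Q "l x" "l y"] t b0 by (intro mult_left_mono) auto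
      then show ?thesis unfolding G_def mQ_lin by (simp add: algebra_simps)
    qed
    finally show "cost d l ?z Q + sqrt (2 * \<alpha> * variance_Q d l ?z Q)
      \<le> (1 - t) * (cost d l x Q + sqrt (2 * \<alpha> * variance_Q d l x Q))
         + t * (cost d l y Q + sqrt (2 * \<alpha> * variance_Q d l y Q))"
      unfolding feq .
  qed
qed

end
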